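(* Let $R\subseteq\mathbb N$ be infinite. Then $R$ is sparse if and only if $R$ is regular.
   Context: Enumerate $R$ increasingly as $(r_n)_{n\in\mathbb N}$; $\sigma:R\to R$ is the successor map $\sigma(r_n)=r_{n+1}$, $\sigma^k$ its $k$-fold iterate ($\sigma^0=\mathrm{id}$). An operator on $R$ is a function $R\to\mathbb Z$, $z\mapsto a_m\sigma^m(z)+\dots+a_0\sigma^0(z)$ with $a_i\in\mathbb Z$. For an operator $A$: $A=_R0$ if $Az=0$ for all $z\in R$; $A>_R0$ (resp. $A<_R0$) if $Az>0$ (resp. $Az<0$) for all but finitely many $z\in R$. $R$ is sparse if every operator $A$ satisfies (S1) $A=_R0$ or $A>_R0$ or $A<_R0$; and (S2) if $A>_R0$ then there is $\Delta\in\mathbb N$ with $A(\sigma^\Delta z)>z$ for all $z\in R$. $R$ is regular if $r_{n+1}/r_n\to\theta$ for some $\theta\in\mathbb R_{>1}\cup\{\infty\}$ and, whenever $\theta$ is algebraic over $\mathbb Q$ with minimal polynomial $f(x)=\sum_{i=0}^ka_ix^i$, we have $\sum_{i=0}^ka_ir_{n+i}=0$ for all $n\in\mathbb N$. *)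

theory Defs
  imports "HOL-Analysis.Analysis" "HOL-Library.Infinite_Set" "HOL-Computational_Algebra.Polynomial"
begin

definition rseq :: "nat set \<Rightarrow> nat \<Rightarrow> nat" where
  "rseq R n = enumerate R n"

text \<open>Successor map sigma(r_n) = r_(n+1).\<close>
definition succR :: "nat set \<Rightarrow> nat \<Rightarrow> nat" where
  "succR R z = enumerate R (Suc (inv_into UNIV (enumerate R) z))"

text \<open>An operator is given by a degree m and integer coefficients a_0..a_m:
  z \<mapsto> sum_{i=0}^m a_i sigma^i(z).\<close>
definition op_apply :: "nat set \<Rightarrow> nat \<Rightarrow> (nat \<Rightarrow> int) \<Rightarrow> nat \<Rightarrow> int" where
  "op_apply R m a z = (\<Sum>i\<le>m. a i * int ((succR R ^^ i) z))"

definition op_eq0 :: "nat set \<Rightarrow> nat \<Rightarrow> (nat \<Rightarrow> int) \<Rightarrow> bool" where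
  "op_eq0 R m a \<longleftrightarrow> (\<forall>z\<in>R. op_apply R m a z = 0)"

definition op_pos :: "nat set \<Rightarrow> nat \<Rightarrow> (nat \<Rightarrow> int) \<Rightarrow> bool" where
  "op_pos R m a \<longleftrightarrow> finite {z\<in>R. \<not> op_apply R m a z > 0}"

definition op_neg :: "nat set \<Rightarrow> nat \<Rightarrow> (nat \<Rightarrow> int) \<Rightarrow> bool" where
  "op_neg R m a \<longleftrightarrow> finite {z\<in>R. \<not> op_apply R m a z < 0}"

definition sparse :: "nat set \<Rightarrow> bool" where
  "sparse R \<longleftrightarrow>
     (\<forall>m a. (op_eq0 R m a \<or> op_pos R m a \<or> op_neg R m a) \<and>
            (op_pos R m a \<longrightarrow>
               (\<exists>\<Delta>::nat. \<forall>z\<in>R. op_apply R m a ((succR R ^^ \<Delta>) z) > int z)))"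

definition is_min_poly :: "real \<Rightarrow> rat poly \<Rightarrow> bool" where
  "is_min_poly \<theta> f \<longleftrightarrow> f \<noteq> 0 \<and> lead_coeff f = 1 \<and> poly (map_poly of_rat f) \<theta> = 0 \<and>
     (\<forall>g::rat poly. g \<noteq> 0 \<and> poly (map_poly of_rat g) \<theta> = 0 \<longrightarrow> degree f \<le> degree g)"

definition regular :: "nat set \<Rightarrow> bool" where
  "regular R \<longleftrightarrow>
     (\<exists>\<theta>::real. \<theta> > 1 \<and>
        (\<lambda>n. real (rseq R (Suc n)) / real (rseq R n)) \<longlonglongrightarrow> \<theta> \<and>
        (algebraic \<theta> \<longrightarrow> (\<forall>f. is_min_poly \<theta> f \<longrightarrow>
            (\<forall>n. (\<Sum>i\<le>degree f. coeff f i * of_nat (rseq R (n + i))) = 0))))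
     \<or> filterlim (\<lambda>n. real (rseq R (Suc n)) / real (rseq R n)) at_top sequentially"

end

theory Submission
  imports Defs
begin


definition Lop :: "(nat \<Rightarrow> nat) \<Rightarrow> nat \<Rightarrow> (nat \<Rightarrow> int) \<Rightarrow> nat \<Rightarrow> int" where
  "Lop r m a n = (\<Sum>i\<le>m. a i * int (r (n + i)))"

definition sparse' :: "(nat \<Rightarrow> nat) \<Rightarrow> bool" where
  "sparse' r \<longleftrightarrow> (\<forall>m a. ((\<forall>n. Lop r m a n = 0) \<or> eventually (\<lambda>n. Lop r m a n > 0) sequentially \<or> eventually (\<lambda>n. Lop r m a n < 0) sequentially) \<and>
     (eventually (\<lambda>n. Lop r m a n > 0) sequentially \<longrightarrow> (\<exists>\<Delta>. \<forall>n. Lop r m a (n + \<Delta>) > int (r n))))"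

definition Erec :: "(nat \<Rightarrow> nat) \<Rightarrow> rat poly \<Rightarrow> nat \<Rightarrow> rat" where
  "Erec r g n = (\<Sum>i\<le>degree g. coeff g i * of_nat (r (n + i)))"

definition regular' :: "(nat \<Rightarrow> nat) \<Rightarrow> bool" where
  "regular' r \<longleftrightarrow>
     (\<exists>\<theta>::real. \<theta> > 1 \<and>
        (\<lambda>n. real (r (Suc n)) / real (r n)) \<longlonglongrightarrow> \<theta> \<and>
        (algebraic \<theta> \<longrightarrow> (\<forall>f. is_min_poly \<theta> f \<longrightarrow> (\<forall>n. Erec r f n = 0))))
     \<or> filterlim (\<lambda>n. real (r (Suc n)) / real (r n)) at_top sequentially"

lemma regular_iff: "regular R \<longleftrightarrow> regular' (enumerate R)"
  unfolding regular_def regular'_def Erec_def rseq_def by simp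

lemma succR_enum:
  fixes R :: "nat set"
  assumes "infinite R"
  shows "(succR R ^^ i) (enumerate R n) = enumerate R (n + i)"
proof (induction i)
  case 0 then show ?case by simp
next
  case (Suc i)
  have inj: "inj (enumerate R)" using assms by (rule inj_enumerate)
  show ?case using Suc by (simp add: succR_def inv_into_f_f[OF inj])
qed

lemma op_apply_enum:
  assumes "infinite R"
  shows "op_apply R m a (enumerate R n) = Lop (enumerate R) m a n"
  unfolding op_apply_def Lop_def using succR_enum[OF assms] by simp

lemma finite_enum_iff:
  fixes R :: "nat set"
  assumes "infinite R"
  shows "finite {z\<in>R. P z} \<longleftrightarrow> finite {n. P (enumerate R n)}"
proof -
  have bij: "bij_betw (enumerate R) UNIV R" using assms by (rule bij_enumerate)
  have inj: "inj (enumerate R)" using assms by (rule inj_enumerate)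
  have "{z\<in>R. P z} = enumerate R ` {n. P (enumerate R n)}"
    using bij unfolding bij_betw_def by auto
  then show ?thesis using inj by (simp add: finite_image_iff inj_on_subset)
qed

lemma forall_R:
  fixes R :: "nat set"
  assumes "infinite R"
  shows "(\<forall>z\<in>R. P z) \<longleftrightarrow> (\<forall>n. P (enumerate R n))"
proof -
  have bij: "bij_betw (enumerate R) UNIV R" using assms by (rule bij_enumerate)
  then have rng: "range (enumerate R) = R" unfolding bij_betw_def by simp
  show ?thesis
  proof
    assume "\<forall>z\<in>R. P z" thus "\<forall>n. P (enumerate R n)" using enumerate_in_set[OF assms] by blast
  next
    assume h: "\<forall>n. P (enumerate R n)"
    show "\<forall>z\<in>R. P z"
    proof
      fix z assume "z \<in> R"
      then obtain n where "z = enumerate R n" using rng by (metis imageE)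
      then show "P z" using h by simp
    qed
  qed
qed

lemma sparse_iff:
  assumes "infinite R"
  shows "sparse R \<longleftrightarrow> sparse' (enumerate R)"
proof -
  have e0: "op_eq0 R m a \<longleftrightarrow> (\<forall>n. Lop (enumerate R) m a n = 0)" for m a
    unfolding op_eq0_def forall_R[OF assms] op_apply_enum[OF assms] ..
  have ep: "op_pos R m a \<longleftrightarrow> eventually (\<lambda>n. Lop (enumerate R) m a n > 0) sequentially" for m a
    unfolding op_pos_def finite_enum_iff[OF assms] op_apply_enum[OF assms]
      cofinite_eq_sequentially[symmetric] eventually_cofinite ..
  have en: "op_neg R m a \<longleftrightarrow> eventually (\<lambda>n. Lop (enumerate R) m a n < 0) sequentially" for m a
    unfolding op_neg_def finite_enum_iff[OF assms] op_apply_enum[OF assms]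
      cofinite_eq_sequentially[symmetric] eventually_cofinite ..
  have es: "(\<forall>z\<in>R. op_apply R m a ((succR R ^^ D) z) > int z) \<longleftrightarrow>
     (\<forall>n. Lop (enumerate R) m a (n + D) > int (enumerate R n))" for m a D
    unfolding forall_R[OF assms] succR_enum[OF assms] op_apply_enum[OF assms] ..
  show ?thesis unfolding sparse_def sparse'_def e0 ep en es ..
qed




locale seqr =
  fixes r :: "nat \<Rightarrow> nat"
  assumes sm: "strict_mono r"
begin

definition rho :: "nat \<Rightarrow> real" where "rho n = real (r (Suc n)) / real (r n)"

lemma r_pos: "n \<ge> 1 \<Longrightarrow> r n > 0"
  using strict_monoD[OF sm, of 0 n] by simp

lemma r_le: "i \<le> j \<Longrightarrow> r i \<le> r j"
  using sm by (simp add: strict_mono_less_eq)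

lemma rho_gt1: "n \<ge> 1 \<Longrightarrow> rho n > 1"
  using r_pos[of n] strict_monoD[OF sm, of n "Suc n"] by (simp add: rho_def)

lemma ratio_lim:
  assumes "rho \<longlonglongrightarrow> \<theta>"
  shows "(\<lambda>n. real (r (n + i)) / real (r n)) \<longlonglongrightarrow> \<theta> ^ i"
proof (induction i)
  case 0
  have "eventually (\<lambda>n. real (r (n + 0)) / real (r n) = 1) sequentially"
    using eventually_ge_at_top[of 1] by eventually_elim (use r_pos in auto)
  then show ?case by (simp add: tendsto_eventually)
next
  case (Suc i)
  have l: "(\<lambda>n. rho (n + i)) \<longlonglongrightarrow> \<theta>" using LIMSEQ_ignore_initial_segment[OF assms] .
  have "(\<lambda>n. rho (n + i) * (real (r (n + i)) / real (r n))) \<longlonglongrightarrow> \<theta> * \<theta> ^ i"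
    by (rule tendsto_mult[OF l Suc])
  moreover have "eventually (\<lambda>n. rho (n + i) * (real (r (n + i)) / real (r n)) = real (r (n + Suc i)) / real (r n)) sequentially"
    using eventually_ge_at_top[of 1]
  proof eventually_elim
    case (elim n)
    then have "r (n + i) > 0" using r_pos by simp
    then show ?case by (simp add: rho_def)
  qed
  ultimately show ?case by (simp add: Lim_transform_eventually)
qed

lemma L_lim:
  assumes "rho \<longlonglongrightarrow> \<theta>"
  shows "(\<lambda>n. real_of_int (Lop r m a n) / real (r n)) \<longlonglongrightarrow> (\<Sum>i\<le>m. real_of_int (a i) * \<theta> ^ i)"
proof -
  have eq: "real_of_int (Lop r m a n) / real (r n) = (\<Sum>i\<le>m. real_of_int (a i) * (real (r (n + i)) / real (r n)))" for n
    by (simp add: Lop_def sum_divide_distrib)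
  show ?thesis unfolding eq
    by (intro tendsto_sum tendsto_mult_left ratio_lim assms)
qed

lemma pow_growth:
  assumes "\<forall>n\<ge>N. rho n \<ge> b" "b \<ge> 0" "N \<ge> 1" "n \<ge> N"
  shows "real (r (n + j)) \<ge> b ^ j * real (r n)"
proof (induction j)
  case 0 then show ?case by simp
next
  case (Suc j)
  have pos: "r (n + j) > 0" using r_pos assms by simp
  have "rho (n + j) \<ge> b" using assms by simp
  then have "real (r (Suc (n + j))) \<ge> b * real (r (n + j))"
    using pos by (simp add: rho_def field_simps)
  moreover have "b * real (r (n + j)) \<ge> b * (b ^ j * real (r n))"
    using Suc assms(2) by (simp add: mult_left_mono)
  ultimately show ?case by simp
qed

lemma S2_from_strength:
  fixes L :: "nat \<Rightarrow> int"
  assumes b: "b > 1" "eventually (\<lambda>n. rho n \<ge> b) sequentially"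
    and c: "c > 0" "eventually (\<lambda>n. real_of_int (L n) \<ge> c * real (r n)) sequentially"
  shows "\<exists>\<Delta>. \<forall>n. L (n + \<Delta>) > int (r n)"
proof -
  from eventually_conj[OF b(2) c(2)] obtain N0 where
    N0: "\<forall>n\<ge>N0. rho n \<ge> b \<and> real_of_int (L n) \<ge> c * real (r n)"
    unfolding eventually_sequentially by blast
  define N where "N = max N0 1"
  have N: "\<forall>n\<ge>N. rho n \<ge> b \<and> real_of_int (L n) \<ge> c * real (r n)" "N \<ge> 1"
    using N0 unfolding N_def by auto
  obtain K where K: "1 / c < b ^ K" using real_arch_pow[OF b(1)] by blast
  have cK: "c * b ^ K > 1" using K c(1) by (simp add: field_simps)
  show ?thesis
  proof (intro exI allI)
    fix n
    define n' where "n' = max n N"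
    have n'N: "n' \<ge> N" "n' \<ge> 1" using N(2) unfolding n'_def by auto
    have "n + (N + K) \<ge> n' + K" unfolding n'_def by auto
    then have "real (r (n + (N + K))) \<ge> real (r (n' + K))" using r_le by simp
    moreover have "real (r (n' + K)) \<ge> b ^ K * real (r n')"
      using pow_growth[of N b n' K] N n'N b(1) by auto
    moreover have "real_of_int (L (n + (N + K))) \<ge> c * real (r (n + (N + K)))"
      using N by auto
    ultimately have "real_of_int (L (n + (N + K))) \<ge> (c * b ^ K) * real (r n')"
      using c(1) by (smt (verit) mult.assoc mult_left_mono)
    moreover have "(c * b ^ K) * real (r n') > real (r n')"
      using cK r_pos[OF n'N(2)] by simp
    moreover have "real (r n') \<ge> real (r n)" using r_le unfolding n'_def by simp
    ultimately show "L (n + (N + K)) > int (r n)" by linarith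
  qed
qed

lemma no_S2:
  fixes L :: "nat \<Rightarrow> int"
  assumes "rho \<longlonglongrightarrow> \<theta>" "\<theta> > 0"
    and L0: "(\<lambda>n. real_of_int (L n) / real (r n)) \<longlonglongrightarrow> 0"
    and D: "\<forall>n. L (n + \<Delta>) > int (r n)"
  shows False
proof -
  have l1: "(\<lambda>n. real_of_int (L (n + \<Delta>)) / real (r (n + \<Delta>))) \<longlonglongrightarrow> 0"
    using LIMSEQ_ignore_initial_segment[OF L0] .
  have l2: "(\<lambda>n. inverse (real (r (n + \<Delta>)) / real (r n))) \<longlonglongrightarrow> inverse (\<theta> ^ \<Delta>)"
    by (intro tendsto_inverse ratio_lim assms) (use assms in simp)
  have ev: "eventually (\<lambda>n. inverse (real (r (n + \<Delta>)) / real (r n)) \<le> real_of_int (L (n + \<Delta>)) / real (r (n + \<Delta>))) sequentially"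
    using eventually_ge_at_top[of 1]
  proof eventually_elim
    case (elim n)
    have p: "real (r (n + \<Delta>)) > 0" using r_pos elim by simp
    have "real (r n) \<le> real_of_int (L (n + \<Delta>))" using D[rule_format, of n] by simp
    then show ?case using p by (simp add: divide_right_mono)
  qed
  have "inverse (\<theta> ^ \<Delta>) \<le> 0" using LIMSEQ_le[OF l2 l1] ev unfolding eventually_sequentially by blast
  moreover have "inverse (\<theta> ^ \<Delta>) > 0" using assms(2) by simp
  ultimately show False by simp
qed

end



lemma poly_le:
  fixes q :: "real poly"
  assumes "degree q \<le> D"
  shows "poly q x = (\<Sum>i\<le>D. coeff q i * x ^ i)"
proof -
  have "poly q x = (\<Sum>i\<le>degree q. coeff q i * x ^ i)" by (rule poly_altdef)
  also have "\<dots> = (\<Sum>i\<le>D. coeff q i * x ^ i)"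
    by (rule sum.mono_neutral_left) (use assms le_degree in auto)
  finally show ?thesis .
qed

lemma coeff_mpr: "coeff (map_poly (of_rat :: rat \<Rightarrow> real) p) i = of_rat (coeff p i)"
  by (simp add: coeff_map_poly)

lemma degree_mpr: "degree (map_poly (of_rat :: rat \<Rightarrow> real) p) = degree p"
  by (rule degree_map_poly) simp

lemma mpr_add: "map_poly (of_rat :: rat \<Rightarrow> real) (p + q) = map_poly of_rat p + map_poly of_rat q"
  by (rule poly_eqI) (simp add: coeff_mpr of_rat_add)

lemma mpr_mult: "map_poly (of_rat :: rat \<Rightarrow> real) (p * q) = map_poly of_rat p * map_poly of_rat q"
  by (rule poly_eqI) (simp add: coeff_mpr coeff_mult of_rat_sum of_rat_mult)

lemma mpr_eq0: "map_poly (of_rat :: rat \<Rightarrow> real) p = 0 \<longleftrightarrow> p = 0"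
  by (rule map_poly_eq_0_iff) auto

lemma poly_mpr: "poly (map_poly (of_rat :: rat \<Rightarrow> real) p) x = (\<Sum>i\<le>degree p. of_rat (coeff p i) * x ^ i)"
  by (simp add: poly_altdef degree_mpr coeff_mpr)

lemma ex_min_poly:
  assumes "p \<noteq> 0" "poly (map_poly (of_rat :: rat \<Rightarrow> real) p) \<theta> = 0"
  shows "\<exists>f. is_min_poly \<theta> f"
proof -
  let ?P = "\<lambda>d. \<exists>g::rat poly. g \<noteq> 0 \<and> poly (map_poly of_rat g) \<theta> = 0 \<and> degree g = d"
  have "?P (degree p)" using assms by blast
  then obtain d where d: "?P d" "\<And>d'. ?P d' \<Longrightarrow> d \<le> d'"
    using ex_has_least_nat[of ?P "degree p" id] by auto
  then obtain g where g: "g \<noteq> 0" "poly (map_poly of_rat g) \<theta> = 0" "degree g = d" by blast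
  define f where "f = smult (inverse (lead_coeff g)) g"
  have lc: "lead_coeff g \<noteq> 0" using g(1) by simp
  have f0: "f \<noteq> 0" using lc g(1) by (simp add: f_def)
  have degf: "degree f = degree g" using lc by (simp add: f_def)
  have "lead_coeff f = 1" using lc by (simp add: f_def)
  moreover have "poly (map_poly of_rat f) \<theta> = 0"
  proof -
    have mps: "map_poly (of_rat::rat\<Rightarrow>real) (smult (inverse (lead_coeff g)) g) = smult (of_rat (inverse (lead_coeff g))) (map_poly of_rat g)"
      by (rule map_poly_smult) (simp_all add: of_rat_mult)
    have "poly (map_poly of_rat f) \<theta> = of_rat (inverse (lead_coeff g)) * poly (map_poly of_rat g) \<theta>"
      unfolding f_def mps poly_smult by (rule refl)
    then show ?thesis by (simp only: g(2) mult_zero_right)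
  qed
  moreover have "\<forall>h::rat poly. h \<noteq> 0 \<and> poly (map_poly of_rat h) \<theta> = 0 \<longrightarrow> degree f \<le> degree h"
  proof (intro allI impI)
    fix h :: "rat poly" assume h: "h \<noteq> 0 \<and> poly (map_poly of_rat h) \<theta> = 0"
    then have "?P (degree h)" by blast
    then have "d \<le> degree h" by (rule d(2))
    then show "degree f \<le> degree h" using g(3) degf by simp
  qed
  ultimately have "is_min_poly \<theta> f" using f0 unfolding is_min_poly_def by (intro conjI) auto
  then show ?thesis by blast
qed

lemma min_poly_dvd:
  assumes "is_min_poly \<theta> f" "poly (map_poly (of_rat :: rat \<Rightarrow> real) p) \<theta> = 0"
  shows "f dvd p"
proof -
  have f: "f \<noteq> 0" "poly (map_poly of_rat f) \<theta> = 0"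
    "\<And>g. g \<noteq> 0 \<Longrightarrow> poly (map_poly of_rat g) \<theta> = 0 \<Longrightarrow> degree f \<le> degree g"
    using assms(1) unfolding is_min_poly_def by auto
  have "p = f * (p div f) + p mod f" by simp
  then have "poly (map_poly of_rat p) \<theta> = poly (map_poly of_rat f) \<theta> * poly (map_poly of_rat (p div f)) \<theta> + poly (map_poly of_rat (p mod f)) \<theta>"
    by (metis mpr_add mpr_mult poly_add poly_mult)
  then have pm0: "poly (map_poly of_rat (p mod f)) \<theta> = 0" using f(2) assms(2) by simp
  have "p mod f = 0"
  proof (rule ccontr)
    assume ne: "p mod f \<noteq> 0"
    from pm0 have "degree f \<le> degree (p mod f)" using f(3) ne by blast
    with degree_mod_less'[OF f(1) ne] show False by simp
  qed
  then show ?thesis by (simp add: mod_eq_0_iff_dvd)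
qed

lemma Erec_le:
  assumes "degree g \<le> D"
  shows "Erec r g n = (\<Sum>i\<le>D. coeff g i * of_nat (r (n + i)))"
  unfolding Erec_def
  by (rule sum.mono_neutral_left) (use assms le_degree in auto)

lemma Erec_add: "Erec r (g + h) n = Erec r g n + Erec r h n"
proof -
  let ?D = "max (degree g) (degree h)"
  have "degree (g + h) \<le> ?D" by (rule degree_add_le) auto
  then show ?thesis
    by (simp add: Erec_le[of _ ?D] distrib_right sum.distrib)
qed

lemma Erec_smult: "Erec r (smult c g) n = c * Erec r g n"
proof -
  have "degree (smult c g) \<le> degree g" by (rule degree_smult_le)
  then show ?thesis by (simp add: Erec_le[of _ "degree g"] sum_distrib_left mult.assoc)
qed

lemma Erec_shift: "Erec r (pCons 0 g) n = Erec r g (Suc n)"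
proof -
  have "degree (pCons 0 g) \<le> Suc (degree g)" by (simp add: degree_pCons_le)
  then have "Erec r (pCons 0 g) n = (\<Sum>i\<le>Suc (degree g). coeff (pCons 0 g) i * of_nat (r (n + i)))"
    by (rule Erec_le)
  also have "\<dots> = (\<Sum>i\<le>degree g. coeff g i * of_nat (r (Suc n + i)))"
    by (subst sum.atMost_Suc_shift) simp
  finally show ?thesis by (simp add: Erec_def)
qed

lemma Erec_mult_zero:
  assumes "\<forall>n. Erec r f n = 0"
  shows "Erec r (q * f) n = 0"
proof (induction q arbitrary: n rule: pCons_induct)
  case 0 then show ?case by (simp add: Erec_def)
next
  case (pCons a q)
  then show ?case
    by (simp add: mult_pCons_left Erec_add Erec_smult Erec_shift assms)
qed

lemma common_denom:
  fixes A :: "rat set"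
  assumes "finite A"
  shows "\<exists>d::int. d > 0 \<and> (\<forall>x\<in>A. of_int d * x \<in> \<int>)"
  using assms
proof (induction A rule: finite_induct)
  case empty then show ?case by (intro exI[of _ 1]) simp
next
  case (insert x A)
  then obtain d where d: "d > 0" "\<forall>y\<in>A. of_int d * y \<in> \<int>" by blast
  obtain a b where ab: "quotient_of x = (a, b)" by force
  have b: "b > 0" using quotient_of_denom_pos[OF ab] .
  have x: "x = of_int a / of_int b" using quotient_of_div[OF ab] .
  have "of_int (d * b) * x \<in> \<int>" using b unfolding x by simp
  moreover have "of_int (d * b) * y \<in> \<int>" if "y \<in> A" for y
  proof -
    have e: "of_int (d * b) * y = of_int b * (of_int d * y)" by simp
    have "of_int b * (of_int d * y) \<in> \<int>" by (rule Ints_mult) (use d(2) that in auto)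
    then show ?thesis unfolding e .
  qed
  ultimately show ?case using d(1) b by (intro exI[of _ "d * b"]) simp
qed




context seqr
begin

lemma rho_eq: "(\<lambda>n. real (r (Suc n)) / real (r n)) = rho"
  by (simp add: rho_def fun_eq_iff)

lemma op_good:
  fixes L :: "nat \<Rightarrow> int"
  assumes b: "b > 1" "eventually (\<lambda>n. rho n \<ge> b) sequentially"
    and h: "(\<forall>n. L n = 0) \<or> (\<exists>c>0. eventually (\<lambda>n. real_of_int (L n) \<ge> c * real (r n)) sequentially)
            \<or> eventually (\<lambda>n. L n < 0) sequentially"
  shows "((\<forall>n. L n = 0) \<or> eventually (\<lambda>n. L n > 0) sequentially \<or> eventually (\<lambda>n. L n < 0) sequentially)
     \<and> (eventually (\<lambda>n. L n > 0) sequentially \<longrightarrow> (\<exists>\<Delta>. \<forall>n. L (n + \<Delta>) > int (r n)))"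
proof -
  have str_pos: "eventually (\<lambda>n. L n > 0) sequentially"
    if "c > 0" "eventually (\<lambda>n. real_of_int (L n) \<ge> c * real (r n)) sequentially" for c
    using that(2) eventually_ge_at_top[of 1]
  proof eventually_elim
    case (elim n)
    have "c * real (r n) > 0" using that(1) r_pos[OF elim(2)] by simp
    then have "real_of_int (L n) > 0" using elim(1) by linarith
    then show ?case by simp
  qed
  have S1: "(\<forall>n. L n = 0) \<or> eventually (\<lambda>n. L n > 0) sequentially \<or> eventually (\<lambda>n. L n < 0) sequentially"
    using h str_pos by blast
  have S2: "\<exists>\<Delta>. \<forall>n. L (n + \<Delta>) > int (r n)" if ev: "eventually (\<lambda>n. L n > 0) sequentially"
  proof -
    have n0: "\<not> (\<forall>n. L n = 0)"
    proof
      assume "\<forall>n. L n = 0"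
      then have "eventually (\<lambda>n. False) sequentially" using ev by (rule_tac eventually_mono[OF ev]) simp
      then show False by simp
    qed
    have n1: "\<not> eventually (\<lambda>n. L n < 0) sequentially"
    proof
      assume "eventually (\<lambda>n. L n < 0) sequentially"
      with ev have "eventually (\<lambda>n. False) sequentially" by eventually_elim simp
      then show False by simp
    qed
    from h n0 n1 obtain c where "c > 0" "eventually (\<lambda>n. real_of_int (L n) \<ge> c * real (r n)) sequentially"
      by blast
    then show ?thesis using S2_from_strength[OF b] by blast
  qed
  show ?thesis using S1 S2 by blast
qed

lemma top_coeff_limit:
  assumes lim: "filterlim rho at_top sequentially"
    and k: "k \<le> m" "\<forall>i. k < i \<and> i \<le> m \<longrightarrow> a i = 0"
  shows "(\<lambda>n. real_of_int (Lop r m a n) / real (r (n + k))) \<longlonglongrightarrow> real_of_int (a k)"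
proof -
  have eq: "real_of_int (Lop r m a n) / real (r (n + k)) =
      (\<Sum>i\<le>m. real_of_int (a i) * (real (r (n + i)) / real (r (n + k))))" for n
    by (simp add: Lop_def sum_divide_distrib)
  have trm: "(\<lambda>n. real_of_int (a i) * (real (r (n + i)) / real (r (n + k)))) \<longlonglongrightarrow>
        (if i = k then real_of_int (a k) else 0)" if "i \<le> m" for i
  proof (cases "i < k")
    case True
    have inv0: "(\<lambda>n. inverse (rho (n + (k - 1)))) \<longlonglongrightarrow> 0"
      using LIMSEQ_ignore_initial_segment[OF tendsto_inverse_0_at_top[OF lim]] .
    have "(\<lambda>n. real (r (n + i)) / real (r (n + k))) \<longlonglongrightarrow> 0"
    proof (rule tendsto_sandwich[OF _ _ tendsto_const inv0])
      show "eventually (\<lambda>n. 0 \<le> real (r (n + i)) / real (r (n + k))) sequentially" by simp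
      show "eventually (\<lambda>n. real (r (n + i)) / real (r (n + k)) \<le> inverse (rho (n + (k - 1)))) sequentially"
      proof (intro always_eventually allI)
        fix n
        have kk: "Suc (n + (k - 1)) = n + k" using True by simp
        have "r (n + i) \<le> r (n + (k - 1))" using True by (intro r_le) simp
        then have "real (r (n + i)) / real (r (n + k)) \<le> real (r (n + (k - 1))) / real (r (n + k))"
          by (simp add: divide_right_mono)
        also have "\<dots> = inverse (rho (n + (k - 1)))" unfolding rho_def kk by simp
        finally show "real (r (n + i)) / real (r (n + k)) \<le> inverse (rho (n + (k - 1)))" .
      qed
    qed
    then have "(\<lambda>n. real_of_int (a i) * (real (r (n + i)) / real (r (n + k)))) \<longlonglongrightarrow> real_of_int (a i) * 0"
      by (rule tendsto_mult_left)
    then show ?thesis using True by simp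
  next
    case False
    show ?thesis
    proof (cases "i = k")
      case True
      have "eventually (\<lambda>n. real_of_int (a i) * (real (r (n + i)) / real (r (n + k))) = real_of_int (a k)) sequentially"
        using eventually_ge_at_top[of 1]
      proof eventually_elim
        case (elim n) then show ?case using r_pos[of "n + k"] True by simp
      qed
      then show ?thesis using True by (simp add: tendsto_eventually)
    next
      case False
      then have "a i = 0" using k(2) \<open>\<not> i < k\<close> that by simp
      then show ?thesis using False by simp
    qed
  qed
  have "(\<lambda>n. \<Sum>i\<le>m. real_of_int (a i) * (real (r (n + i)) / real (r (n + k)))) \<longlonglongrightarrow>
        (\<Sum>i\<le>m. if i = k then real_of_int (a k) else 0)"
    by (rule tendsto_sum) (use trm in auto)
  then show ?thesis unfolding eq using k(1) by simp
qed

lemma zero_case: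
  assumes alg: "algebraic \<theta> \<longrightarrow> (\<forall>f. is_min_poly \<theta> f \<longrightarrow> (\<forall>n. Erec r f n = 0))"
    and P: "(\<Sum>i\<le>m. real_of_int (a i) * \<theta> ^ i) = 0"
  shows "Lop r m a n = 0"
proof (cases "\<forall>i\<le>m. a i = 0")
  case True then show ?thesis by (simp add: Lop_def)
next
  case False
  then obtain j where j: "j \<le> m" "a j \<noteq> 0" by blast
  define p :: "rat poly" where "p = (\<Sum>i\<le>m. monom (of_int (a i)) i)"
  have cp: "coeff p k = (if k \<le> m then of_int (a k) else 0)" for k
    by (simp add: p_def coeff_sum coeff_monom)
  have dp: "degree p \<le> m" by (rule degree_le) (simp add: cp)
  have p0: "p \<noteq> 0"
  proof
    assume "p = 0"
    then have "coeff p j = 0" by simp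
    then show False using cp[of j] j by simp
  qed
  have root: "poly (map_poly (of_rat :: rat \<Rightarrow> real) p) \<theta> = 0"
  proof -
    have "poly (map_poly (of_rat :: rat \<Rightarrow> real) p) \<theta> = (\<Sum>i\<le>m. coeff (map_poly of_rat p) i * \<theta> ^ i)"
      by (rule poly_le) (simp add: degree_mpr dp)
    also have "\<dots> = (\<Sum>i\<le>m. real_of_int (a i) * \<theta> ^ i)"
      by (rule sum.cong) (simp_all add: coeff_mpr cp)
    finally show ?thesis using P by simp
  qed
  have "algebraic \<theta>"
    by (rule algebraicI'[of "map_poly of_rat p"]) (simp_all add: coeff_mpr mpr_eq0 p0 root)
  with alg have E0: "\<forall>f. is_min_poly \<theta> f \<longrightarrow> (\<forall>n. Erec r f n = 0)" by blast
  obtain f where f: "is_min_poly \<theta> f" using ex_min_poly[OF p0 root] by blast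
  have "f dvd p" by (rule min_poly_dvd[OF f root])
  then obtain q where pq: "p = f * q" by (elim dvdE)
  have "Erec r p n = 0" unfolding pq mult.commute[of f q]
    by (rule Erec_mult_zero) (use E0 f in blast)
  moreover have "Erec r p n = of_int (Lop r m a n)"
    by (simp add: Erec_le[OF dp] cp Lop_def)
  ultimately show ?thesis by simp
qed

lemma reg_to_sparse:
  assumes "regular' r"
  shows "sparse' r"
  using assms unfolding regular'_def rho_eq
proof (elim disjE exE conjE)
  fix \<theta> :: real
  assume th: "\<theta> > 1" and lim: "rho \<longlonglongrightarrow> \<theta>"
    and alg: "algebraic \<theta> \<longrightarrow> (\<forall>f. is_min_poly \<theta> f \<longrightarrow> (\<forall>n. Erec r f n = 0))"
  define b where "b = (1 + \<theta>) / 2"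
  have b: "b > 1" "b < \<theta>" using th by (auto simp: b_def)
  have evb: "eventually (\<lambda>n. rho n \<ge> b) sequentially"
    using order_tendstoD(1)[OF lim b(2)] by (rule eventually_mono) simp
  show "sparse' r" unfolding sparse'_def
  proof (intro allI)
    fix m a
    define P where "P = (\<Sum>i\<le>m. real_of_int (a i) * \<theta> ^ i)"
    have LL: "(\<lambda>n. real_of_int (Lop r m a n) / real (r n)) \<longlonglongrightarrow> P"
      unfolding P_def by (rule L_lim[OF lim])
    have "(\<forall>n. Lop r m a n = 0) \<or> (\<exists>c>0. eventually (\<lambda>n. real_of_int (Lop r m a n) \<ge> c * real (r n)) sequentially)
            \<or> eventually (\<lambda>n. Lop r m a n < 0) sequentially"
    proof (cases "P > 0")
      case True
      have P2: "P / 2 < P" using True by simp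
      have "eventually (\<lambda>n. real_of_int (Lop r m a n) \<ge> P / 2 * real (r n)) sequentially"
        using order_tendstoD(1)[OF LL P2] eventually_ge_at_top[of 1]
      proof eventually_elim
        case (elim n)
        have "real (r n) > 0" using r_pos[OF elim(2)] by simp
        then show ?case using elim(1) by (simp add: pos_less_divide_eq)
      qed
      then show ?thesis using True by (intro disjI2 disjI1 exI[of _ "P / 2"]) simp
    next
      case False
      show ?thesis
      proof (cases "P < 0")
        case True
        have "eventually (\<lambda>n. Lop r m a n < 0) sequentially"
          using order_tendstoD(2)[OF LL True] eventually_ge_at_top[of 1]
        proof eventually_elim
          case (elim n)
          have "real (r n) > 0" using r_pos[OF elim(2)] by simp
          then show ?case using elim(1) by (simp add: divide_less_0_iff)
        qed
        then show ?thesis by blast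
      next
        case False
        then have "P = 0" using \<open>\<not> P > 0\<close> by simp
        then show ?thesis using zero_case[OF alg] unfolding P_def by blast
      qed
    qed
    then show "((\<forall>n. Lop r m a n = 0) \<or> eventually (\<lambda>n. Lop r m a n > 0) sequentially \<or> eventually (\<lambda>n. Lop r m a n < 0) sequentially) \<and>
     (eventually (\<lambda>n. Lop r m a n > 0) sequentially \<longrightarrow> (\<exists>\<Delta>. \<forall>n. Lop r m a (n + \<Delta>) > int (r n)))"
      by (rule op_good[OF b(1) evb])
  qed
next
  assume lim: "filterlim rho at_top sequentially"
  have evb: "eventually (\<lambda>n. rho n \<ge> 2) sequentially"
    using lim unfolding filterlim_at_top by blast
  have two: "(2::real) > 1" by simp
  show "sparse' r" unfolding sparse'_def
  proof (intro allI)
    fix m a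
    have "(\<forall>n. Lop r m a n = 0) \<or> (\<exists>c>0. eventually (\<lambda>n. real_of_int (Lop r m a n) \<ge> c * real (r n)) sequentially)
            \<or> eventually (\<lambda>n. Lop r m a n < 0) sequentially"
    proof (cases "\<forall>i\<le>m. a i = 0")
      case True then show ?thesis by (simp add: Lop_def)
    next
      case False
      define K where "K = {i. i \<le> m \<and> a i \<noteq> 0}"
      have Kfin: "finite K" unfolding K_def by simp
      have Kne: "K \<noteq> {}" using False unfolding K_def by auto
      define k where "k = Max K"
      have kK: "k \<in> K" unfolding k_def using Kfin Kne by (rule Max_in)
      have km: "k \<le> m" "a k \<noteq> 0" using kK unfolding K_def by auto
      have kt: "\<forall>i. k < i \<and> i \<le> m \<longrightarrow> a i = 0"
      proof (intro allI impI)
        fix i assume i: "k < i \<and> i \<le> m"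
        show "a i = 0"
        proof (rule ccontr)
          assume "a i \<noteq> 0"
          then have "i \<in> K" using i unfolding K_def by simp
          then have "i \<le> k" unfolding k_def using Kfin by simp
          then show False using i by simp
        qed
      qed
      have LL: "(\<lambda>n. real_of_int (Lop r m a n) / real (r (n + k))) \<longlonglongrightarrow> real_of_int (a k)"
        by (rule top_coeff_limit[OF lim km(1) kt])
      show ?thesis
      proof (cases "a k > 0")
        case True
        have half: "1 / 2 < real_of_int (a k)" using True by simp
        have "eventually (\<lambda>n. real_of_int (Lop r m a n) \<ge> 1 / 2 * real (r n)) sequentially"
          using order_tendstoD(1)[OF LL half] eventually_ge_at_top[of 1]
        proof eventually_elim
          case (elim n)
          have p: "real (r (n + k)) > 0" using r_pos[of "n + k"] elim(2) by simp
          have "real (r n) \<le> real (r (n + k))" using r_le[of n "n + k"] by simp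
          moreover have "1 / 2 * real (r (n + k)) < real_of_int (Lop r m a n)"
            using elim(1) p by (simp add: pos_less_divide_eq)
          ultimately show ?case by linarith
        qed
        then show ?thesis by (intro disjI2 disjI1 exI[of _ "1/2 :: real"]) simp
      next
        case False
        then have neg: "real_of_int (a k) < 0" using km(2) by simp
        have "eventually (\<lambda>n. Lop r m a n < 0) sequentially"
          using order_tendstoD(2)[OF LL neg] eventually_ge_at_top[of 1]
        proof eventually_elim
          case (elim n)
          have "real (r (n + k)) > 0" using r_pos[of "n + k"] elim(2) by simp
          then show ?case using elim(1) by (simp add: divide_less_0_iff)
        qed
        then show ?thesis by blast
      qed
    qed
    then show "((\<forall>n. Lop r m a n = 0) \<or> eventually (\<lambda>n. Lop r m a n > 0) sequentially \<or> eventually (\<lambda>n. Lop r m a n < 0) sequentially) \<and>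
     (eventually (\<lambda>n. Lop r m a n > 0) sequentially \<longrightarrow> (\<exists>\<Delta>. \<forall>n. Lop r m a (n + \<Delta>) > int (r n)))"
      by (rule op_good[OF two evb])
  qed
qed

end



context seqr
begin

lemma side:
  assumes sp: "sparse' r" and bpos: "b > 0"
  shows "eventually (\<lambda>n. rho n \<ge> of_int a / of_int b) sequentially \<or>
         eventually (\<lambda>n. rho n \<le> of_int a / of_int b) sequentially"
proof -
  define c :: "nat \<Rightarrow> int" where "c = (\<lambda>i. if i = 0 then - a else b)"
  have Lc: "Lop r 1 c n = b * int (r (Suc n)) - a * int (r n)" for n
    by (simp add: Lop_def c_def)
  have bp: "real_of_int b > 0" using bpos by simp
  have key: "rho n \<ge> of_int a / of_int b \<longleftrightarrow> real_of_int a * real (r n) \<le> real_of_int b * real (r (Suc n))"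
    if "n \<ge> 1" for n
  proof -
    have p: "real (r n) > 0" using r_pos[OF that] by simp
    show ?thesis unfolding rho_def using p bp by (simp add: field_simps)
  qed
  have key2: "rho n \<le> of_int a / of_int b \<longleftrightarrow> real_of_int a * real (r n) \<ge> real_of_int b * real (r (Suc n))"
    if "n \<ge> 1" for n
  proof -
    have p: "real (r n) > 0" using r_pos[OF that] by simp
    show ?thesis unfolding rho_def using p bp by (simp add: field_simps)
  qed
  from sp have "(\<forall>n. Lop r 1 c n = 0) \<or> eventually (\<lambda>n. Lop r 1 c n > 0) sequentially \<or>
      eventually (\<lambda>n. Lop r 1 c n < 0) sequentially"
    unfolding sparse'_def by blast
  then show ?thesis
  proof (elim disjE)
    assume h: "\<forall>n. Lop r 1 c n = 0"
    have "eventually (\<lambda>n. rho n \<ge> of_int a / of_int b) sequentially"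
      using eventually_ge_at_top[of 1]
    proof eventually_elim
      case (elim n)
      have "b * int (r (Suc n)) = a * int (r n)" using h[rule_format, of n] unfolding Lc by simp
      then have "real_of_int (b * int (r (Suc n))) = real_of_int (a * int (r n))" by simp
      then show ?case using key[OF elim] by simp
    qed
    then show ?thesis by blast
  next
    assume h: "eventually (\<lambda>n. Lop r 1 c n > 0) sequentially"
    have "eventually (\<lambda>n. rho n \<ge> of_int a / of_int b) sequentially"
      using h eventually_ge_at_top[of 1]
    proof eventually_elim
      case (elim n)
      have "b * int (r (Suc n)) > a * int (r n)" using elim(1) unfolding Lc by simp
      then have "real_of_int (b * int (r (Suc n))) > real_of_int (a * int (r n))" by linarith
      then show ?case using key[OF elim(2)] by simp
    qed
    then show ?thesis by blast
  next
    assume h: "eventually (\<lambda>n. Lop r 1 c n < 0) sequentially"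
    have "eventually (\<lambda>n. rho n \<le> of_int a / of_int b) sequentially"
      using h eventually_ge_at_top[of 1]
    proof eventually_elim
      case (elim n)
      have "b * int (r (Suc n)) < a * int (r n)" using elim(1) unfolding Lc by simp
      then have "real_of_int (b * int (r (Suc n))) < real_of_int (a * int (r n))" by linarith
      then show ?case using key2[OF elim(2)] by simp
    qed
    then show ?thesis by blast
  qed
qed

lemma side_rat:
  assumes sp: "sparse' r" and q: "q \<in> \<rat>"
  shows "eventually (\<lambda>n. rho n \<ge> q) sequentially \<or> eventually (\<lambda>n. rho n \<le> q) sequentially"
proof -
  from q obtain a b where "b > 0" "q = of_int a / of_int b" by (elim Rats_cases')
  then show ?thesis using side[OF sp] by simp
qed

lemma rho_conv:
  assumes sp: "sparse' r"
  shows "filterlim rho at_top sequentially \<or> (\<exists>\<theta>\<ge>1. rho \<longlonglongrightarrow> \<theta>)"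
proof (cases "\<forall>q\<in>\<rat>. eventually (\<lambda>n. rho n \<ge> q) sequentially")
  case True
  have "filterlim rho at_top sequentially"
    unfolding filterlim_at_top
  proof
    fix Z :: real
    have "of_int \<lceil>Z\<rceil> \<in> (\<rat> :: real set)" by simp
    then have "eventually (\<lambda>n. rho n \<ge> of_int \<lceil>Z\<rceil>) sequentially" using True by blast
    then show "eventually (\<lambda>n. Z \<le> rho n) sequentially"
      by (rule eventually_mono) (meson le_of_int_ceiling order_trans)
  qed
  then show ?thesis by blast
next
  case False
  then obtain q0 where q0: "q0 \<in> \<rat>" "\<not> eventually (\<lambda>n. rho n \<ge> q0) sequentially" by blast
  have E0: "eventually (\<lambda>n. rho n \<le> q0) sequentially" using side_rat[OF sp q0(1)] q0(2) by blast
  define S where "S = {q \<in> \<rat>. eventually (\<lambda>n. rho n \<ge> q) sequentially}"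
  have ub: "s \<le> q0" if "s \<in> S" for s
  proof (rule ccontr)
    assume ns: "\<not> s \<le> q0"
    have "eventually (\<lambda>n. rho n \<ge> s) sequentially" using that unfolding S_def by blast
    from this E0 have "eventually (\<lambda>n. False) sequentially" by eventually_elim (use ns in simp)
    then show False by simp
  qed
  have bdd: "bdd_above S" using ub by (intro bdd_aboveI) blast
  have "eventually (\<lambda>n. rho n \<ge> 1) sequentially"
    using eventually_ge_at_top[of 1] by (rule eventually_mono) (use rho_gt1 in force)
  then have oneS: "1 \<in> S" unfolding S_def by simp
  have ne: "S \<noteq> {}" using oneS by blast
  define \<theta> where "\<theta> = Sup S"
  have th1: "\<theta> \<ge> 1" unfolding \<theta>_def using oneS bdd by (rule cSup_upper)
  have "rho \<longlonglongrightarrow> \<theta>"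
  proof (rule order_tendstoI)
    fix x assume "x < \<theta>"
    then obtain q where q: "q \<in> \<rat>" "x < q" "q < \<theta>" using Rats_dense_in_real by blast
    then obtain s where s: "s \<in> S" "q < s" using less_cSup_iff[OF ne bdd] unfolding \<theta>_def by blast
    then have "eventually (\<lambda>n. rho n \<ge> s) sequentially" unfolding S_def by blast
    then show "eventually (\<lambda>n. x < rho n) sequentially"
      by (rule eventually_mono) (use q s in linarith)
  next
    fix x assume "\<theta> < x"
    then obtain q where q: "q \<in> \<rat>" "\<theta> < q" "q < x" using Rats_dense_in_real by blast
    have "q \<notin> S"
    proof
      assume "q \<in> S"
      then have "q \<le> \<theta>" unfolding \<theta>_def using bdd by (rule cSup_upper)
      then show False using q by simp
    qed
    then have "eventually (\<lambda>n. rho n \<le> q) sequentially"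
      using side_rat[OF sp q(1)] q(1) unfolding S_def by blast
    then show "eventually (\<lambda>n. rho n < x) sequentially"
      by (rule eventually_mono) (use q in linarith)
  qed
  then show ?thesis using th1 by blast
qed

lemma sparse_to_reg:
  assumes sp: "sparse' r"
  shows "regular' r"
proof -
  from rho_conv[OF sp] show ?thesis
  proof (elim disjE exE conjE)
    assume "filterlim rho at_top sequentially"
    then show ?thesis unfolding regular'_def rho_eq by blast
  next
    fix \<theta> :: real assume th1: "\<theta> \<ge> 1" and lim: "rho \<longlonglongrightarrow> \<theta>"
    have th: "\<theta> > 1"
    proof (rule ccontr)
      assume "\<not> \<theta> > 1"
      then have t1: "\<theta> = 1" using th1 by simp
      define c :: "nat \<Rightarrow> int" where "c = (\<lambda>i. if i = 0 then - 1 else 1)"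
      have Lc: "Lop r 1 c n = int (r (Suc n)) - int (r n)" for n
        by (simp add: Lop_def c_def)
      have pos: "eventually (\<lambda>n. Lop r 1 c n > 0) sequentially"
        unfolding Lc using strict_monoD[OF sm, of n "Suc n" for n] by (intro always_eventually) simp
      then obtain D where D: "\<forall>n. Lop r 1 c (n + D) > int (r n)"
        using sp unfolding sparse'_def by blast
      have "(\<lambda>n. real_of_int (Lop r 1 c n) / real (r n)) \<longlonglongrightarrow> (\<Sum>i\<le>1. real_of_int (c i) * \<theta> ^ i)"
        by (rule L_lim[OF lim])
      moreover have "(\<Sum>i\<le>(1::nat). real_of_int (c i) * \<theta> ^ i) = 0" using t1 by (simp add: c_def)
      ultimately have "(\<lambda>n. real_of_int (Lop r 1 c n) / real (r n)) \<longlonglongrightarrow> 0" by simp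
      then show False using no_S2[OF lim _ _ D] t1 by simp
    qed
    have alg: "\<forall>f. is_min_poly \<theta> f \<longrightarrow> (\<forall>n. Erec r f n = 0)"
    proof (intro allI impI)
      fix f n assume f: "is_min_poly \<theta> f"
      have froot: "poly (map_poly (of_rat :: rat \<Rightarrow> real) f) \<theta> = 0" using f unfolding is_min_poly_def by blast
      obtain d :: int where d: "d > 0" "\<forall>x\<in>coeff f ` {..degree f}. of_int d * x \<in> \<int>"
        using common_denom[of "coeff f ` {..degree f}"] by blast
      have "\<forall>i. \<exists>k. of_int d * coeff f i = rat_of_int k"
      proof
        fix i show "\<exists>k. of_int d * coeff f i = rat_of_int k"
        proof (cases "i \<le> degree f")
          case True
          then have "of_int d * coeff f i \<in> \<int>" using d(2) by blast
          then show ?thesis by (elim Ints_cases) blast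
        next
          case False
          then have "coeff f i = 0" by (simp add: coeff_eq_0)
          then show ?thesis by (intro exI[of _ 0]) simp
        qed
      qed
      then obtain a where a: "\<And>i. of_int d * coeff f i = rat_of_int (a i)" unfolding choice_iff by blast
      define m where "m = degree f"
      have areal: "real_of_int (a i) = real_of_int d * of_rat (coeff f i)" for i
      proof -
        have "real_of_int (a i) = of_rat (rat_of_int (a i))" by simp
        also have "\<dots> = of_rat (of_int d * coeff f i)" by (simp add: a)
        also have "\<dots> = real_of_int d * of_rat (coeff f i)" by (simp add: of_rat_mult)
        finally show ?thesis .
      qed
      have L0: "(\<lambda>n. real_of_int (Lop r m a n) / real (r n)) \<longlonglongrightarrow> 0"
      proof -
        have "(\<lambda>n. real_of_int (Lop r m a n) / real (r n)) \<longlonglongrightarrow> (\<Sum>i\<le>m. real_of_int (a i) * \<theta> ^ i)"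
          by (rule L_lim[OF lim])
        moreover have "(\<Sum>i\<le>m. real_of_int (a i) * \<theta> ^ i) = real_of_int d * poly (map_poly of_rat f) \<theta>"
          unfolding poly_mpr m_def areal by (simp add: sum_distrib_left mult.assoc)
        ultimately show ?thesis using froot by simp
      qed
      have Lneg: "Lop r m (\<lambda>i. - a i) n = - Lop r m a n" for n
        by (simp add: Lop_def sum_negf)
      have L0': "(\<lambda>n. real_of_int (Lop r m (\<lambda>i. - a i) n) / real (r n)) \<longlonglongrightarrow> 0"
        unfolding Lneg using tendsto_minus[OF L0] by simp
      have ER: "rat_of_int (Lop r m a n) = of_int d * Erec r f n" for n
        by (simp add: Lop_def Erec_def m_def sum_distrib_left a[symmetric] mult.assoc)
      have thp: "\<theta> > 0" using th by simp
      from sp have "(\<forall>n. Lop r m a n = 0) \<or> eventually (\<lambda>n. Lop r m a n > 0) sequentially \<or>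
          eventually (\<lambda>n. Lop r m a n < 0) sequentially"
        unfolding sparse'_def by blast
      then have "\<forall>n. Lop r m a n = 0"
      proof (elim disjE)
        assume "eventually (\<lambda>n. Lop r m a n > 0) sequentially"
        then obtain D where D: "\<forall>n. Lop r m a (n + D) > int (r n)"
          using sp unfolding sparse'_def by blast
        show ?thesis using no_S2[OF lim thp L0 D] ..
      next
        assume "eventually (\<lambda>n. Lop r m a n < 0) sequentially"
        then have "eventually (\<lambda>n. Lop r m (\<lambda>i. - a i) n > 0) sequentially"
          unfolding Lneg by simp
        then obtain D where D: "\<forall>n. Lop r m (\<lambda>i. - a i) (n + D) > int (r n)"
          using sp unfolding sparse'_def by blast
        show ?thesis using no_S2[OF lim thp L0' D] ..
      qed simp
      then have "of_int d * Erec r f n = 0" using ER[of n] by simp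
      then show "Erec r f n = 0" using d(1) by simp
    qed
    show ?thesis unfolding regular'_def rho_eq using th lim alg by blast
  qed
qed

end

lemma main_equiv:
  fixes R :: "nat set"
  assumes "infinite R"
  shows "sparse R \<longleftrightarrow> regular R"
proof -
  interpret seqr "enumerate R"
    by unfold_locales (simp add: strict_mono_def assms enumerate_mono)
  show ?thesis unfolding sparse_iff[OF assms] regular_iff
    using sparse_to_reg reg_to_sparse by blast
qed



theorem mainTheorem8:
  fixes R :: "nat set"
  assumes "infinite R"
  shows "sparse R \<longleftrightarrow> regular R"
  using main_equiv[OF assms] .

end
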